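(* Let $(X,\mathcal B,\mu)$ be a probability space and $G$ an lcsc Abelian group with a translation-invariant metric $d$. Let $\varphi_n,\psi_n\colon X\to G$ be measurable maps taking values in a compact set $C\subset G$, with each $\psi_n$ taking values in a fixed finite set $F\subset C$. Assume that, weakly, $(\varphi_n)_*\mu\to\nu$, $(\psi_n)_*\mu\to\kappa$ and $(\varphi_n+\psi_n)_*\mu\to\rho$. Then for each $h_0\in\operatorname{supp}\kappa$ there exists $g_0\in\operatorname{supp}\nu$ with $h_0+g_0\in\operatorname{supp}\rho$; and for each $g_0\in\operatorname{supp}\nu$ there exists $h_0\in\operatorname{supp}\kappa$ with $h_0+g_0\in\operatorname{supp}\rho$. *)

theory Defs
  imports "HOL-Probability.Probability"
begin

definition weak_conv_seq :: "(nat \<Rightarrow> 'a::topological_space measure) \<Rightarrow> 'a measure \<Rightarrow> bool" where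
  "weak_conv_seq \<mu>s \<mu> \<longleftrightarrow>
     (\<forall>f :: 'a \<Rightarrow> real. continuous_on UNIV f \<and> bounded (range f) \<longrightarrow>
        (\<lambda>n. integral\<^sup>L (\<mu>s n) f) \<longlonglongrightarrow> integral\<^sup>L \<mu> f)"

definition measure_supp :: "'a::topological_space measure \<Rightarrow> 'a set" where
  "measure_supp \<nu> = {x. \<forall>U. open U \<and> x \<in> U \<longrightarrow> emeasure \<nu> U > 0}"

end

theory Submission imports Defs begin

definition bump :: "'g::metric_space \<Rightarrow> real \<Rightarrow> 'g \<Rightarrow> real" where
  "bump x r y = min 1 (max 0 (2 - (2 / r) * dist y x))"

lemma bump_cont: "continuous_on UNIV (bump x r)"
  unfolding bump_def by (intro continuous_intros)

lemma bump_bounds: "0 \<le> bump x r y" "bump x r y \<le> 1"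
  unfolding bump_def by auto

lemma bump_bdd: "bounded (range (bump x r))"
  unfolding bounded_iff using bump_bounds by (metis abs_of_nonneg rangeE real_norm_def)

lemma bump_in: "r > 0 \<Longrightarrow> y \<in> ball x (r/2) \<Longrightarrow> bump x r y = 1"
  unfolding bump_def by (auto simp: dist_commute field_simps)

lemma bump_out: "r > 0 \<Longrightarrow> y \<notin> ball x r \<Longrightarrow> bump x r y = 0"
  unfolding bump_def by (auto simp: dist_commute field_simps)

lemma bump_le_ind: "r > 0 \<Longrightarrow> bump x r y \<le> indicator (ball x r) y"
  using bump_out[of r y x] bump_bounds[of x r y] by (auto simp: indicator_def)

lemma ind_le_bump: "r > 0 \<Longrightarrow> indicator (ball x (r/2)) y \<le> bump x r y"
  using bump_in[of r y x] bump_bounds[of x r y] by (auto simp: indicator_def)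

lemma bump_integrable:
  assumes "prob_space N" "sets N = sets borel"
  shows "integrable N (bump x r)"
proof -
  interpret prob_space N by fact
  show ?thesis
  proof (rule integrable_const_bound[where B=1])
    show "AE y in N. norm (bump x r y) \<le> 1" by (intro AE_I2) (metis abs_of_nonneg bump_bounds real_norm_def)
    show "bump x r \<in> borel_measurable N"
      using borel_measurable_continuous_onI[OF bump_cont] by (simp add: measurable_cong_sets[OF assms(2) refl])
  qed
qed

lemma bump_int_le:
  assumes "prob_space N" "sets N = sets borel" "r > 0"
  shows "integral\<^sup>L N (bump x r) \<le> measure N (ball x r)"
proof -
  interpret prob_space N by fact
  have "integral\<^sup>L N (bump x r) \<le> integral\<^sup>L N (indicator (ball x r))"
    apply (rule integral_mono[OF bump_integrable[OF assms(1,2)]])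
     apply (rule integrable_real_indicator) using assms(2) apply simp apply (simp add: less_top[symmetric])
    using bump_le_ind assms(3) by blast
  also have "\<dots> = measure N (ball x r)" using sets_eq_imp_space_eq[OF assms(2)] by (simp add: integral_indicator)
  finally show ?thesis .
qed

lemma bump_int_ge:
  assumes "prob_space N" "sets N = sets borel" "r > 0"
  shows "measure N (ball x (r/2)) \<le> integral\<^sup>L N (bump x r)"
proof -
  interpret prob_space N by fact
  have "integral\<^sup>L N (indicator (ball x (r/2))) \<le> integral\<^sup>L N (bump x r)"
    apply (rule integral_mono[OF _ bump_integrable[OF assms(1,2)]])
     apply (rule integrable_real_indicator) using assms(2) apply simp apply (simp add: less_top[symmetric])
    using ind_le_bump assms(3) by blast
  moreover have "integral\<^sup>L N (indicator (ball x (r/2))) = measure N (ball x (r/2))" using sets_eq_imp_space_eq[OF assms(2)] by (simp add: integral_indicator)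
  ultimately show ?thesis by simp
qed


lemma suppA:
  assumes M: "prob_space M" and X: "\<And>n. X n \<in> borel_measurable M"
    and wc: "weak_conv_seq (\<lambda>n. distr M borel (X n)) \<mu>"
    and mu: "prob_space \<mu>" "sets \<mu> = sets borel"
    and x: "x \<in> measure_supp \<mu>" and e: "e > 0"
  shows "\<not> (\<lambda>n. measure M (X n -` ball x e \<inter> space M)) \<longlonglongrightarrow> 0"
proof
  assume lim: "(\<lambda>n. measure M (X n -` ball x e \<inter> space M)) \<longlonglongrightarrow> 0"
  have Nn: "prob_space (distr M borel (X n))" for n using prob_space.prob_space_distr[OF M X] .
  have le: "integral\<^sup>L (distr M borel (X n)) (bump x e) \<le> measure M (X n -` ball x e \<inter> space M)" for n
    using bump_int_le[OF Nn, of n e x] X e by (simp add: measure_distr)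
  have ge0: "0 \<le> integral\<^sup>L (distr M borel (X n)) (bump x e)" for n
    by (rule integral_nonneg_AE) (simp add: bump_bounds)
  have "(\<lambda>n. integral\<^sup>L (distr M borel (X n)) (bump x e)) \<longlonglongrightarrow> 0"
    by (rule tendsto_sandwich[OF _ _ tendsto_const lim]) (auto simp: le ge0)
  moreover have "(\<lambda>n. integral\<^sup>L (distr M borel (X n)) (bump x e)) \<longlonglongrightarrow> integral\<^sup>L \<mu> (bump x e)"
    using wc bump_cont bump_bdd unfolding weak_conv_seq_def by blast
  ultimately have z: "integral\<^sup>L \<mu> (bump x e) = 0" using LIMSEQ_unique by metis
  have "emeasure \<mu> (ball x (e/2)) > 0" using x e unfolding measure_supp_def by auto
  hence "measure \<mu> (ball x (e/2)) > 0"
    using finite_measure.emeasure_eq_measure[OF prob_space.finite_measure[OF mu(1)]] by simp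
  with bump_int_ge[OF mu e, of x] z show False by simp
qed

lemma suppB:
  assumes M: "prob_space M" and X: "\<And>n. X n \<in> borel_measurable M"
    and wc: "weak_conv_seq (\<lambda>n. distr M borel (X n)) \<mu>"
    and mu: "prob_space \<mu>" "sets \<mu> = sets borel"
    and freq: "\<And>e. e > 0 \<Longrightarrow> \<not> (\<lambda>n. measure M (X n -` ball x e \<inter> space M)) \<longlonglongrightarrow> 0"
  shows "x \<in> measure_supp \<mu>"
  unfolding measure_supp_def
proof (intro CollectI allI impI)
  fix U assume U: "open U \<and> x \<in> U"
  then obtain e where e: "e > 0" "ball x e \<subseteq> U" using open_contains_ball by blast
  show "emeasure \<mu> U > 0"
  proof (rule ccontr)
    assume "\<not> emeasure \<mu> U > 0"
    hence U0: "emeasure \<mu> U = 0" by (simp add: not_gr_zero)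
    have "emeasure \<mu> (ball x e) \<le> emeasure \<mu> U"
      by (rule emeasure_mono[OF e(2)]) (use U mu in auto)
    hence "measure \<mu> (ball x e) = 0" using U0 by (simp add: measure_def)
    hence "integral\<^sup>L \<mu> (bump x e) \<le> 0" using bump_int_le[OF mu e(1), of x] by simp
    moreover have "0 \<le> integral\<^sup>L \<mu> (bump x e)" by (rule integral_nonneg_AE) (simp add: bump_bounds)
    ultimately have z: "integral\<^sup>L \<mu> (bump x e) = 0" by simp
    have "(\<lambda>n. integral\<^sup>L (distr M borel (X n)) (bump x e)) \<longlonglongrightarrow> integral\<^sup>L \<mu> (bump x e)"
      using wc bump_cont bump_bdd unfolding weak_conv_seq_def by blast
    hence lim: "(\<lambda>n. integral\<^sup>L (distr M borel (X n)) (bump x e)) \<longlonglongrightarrow> 0" using z by simp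
    have Nn: "prob_space (distr M borel (X n))" for n using prob_space.prob_space_distr[OF M X] .
    have le: "measure M (X n -` ball x (e/2) \<inter> space M) \<le> integral\<^sup>L (distr M borel (X n)) (bump x e)" for n
      using bump_int_ge[OF Nn _ e(1), of n x] X by (simp add: measure_distr)
    have "(\<lambda>n. measure M (X n -` ball x (e/2) \<inter> space M)) \<longlonglongrightarrow> 0"
      by (rule tendsto_sandwich[OF _ _ tendsto_const lim]) (auto simp: le)
    with freq[of "e/2"] e show False by simp
  qed
qed

lemma tends0_mono:
  assumes "finite_measure M" "\<And>n. A n \<subseteq> B n" "\<And>n. B n \<in> sets M"
    and "(\<lambda>n. measure M (B n)) \<longlonglongrightarrow> 0"
  shows "(\<lambda>n. measure M (A n)) \<longlonglongrightarrow> 0"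
  by (rule tendsto_sandwich[OF _ _ tendsto_const assms(4)])
     (auto intro!: always_eventually finite_measure.finite_measure_mono[OF assms(1)] assms(2,3))

theorem lemma2p4:
  fixes M :: "'x measure"
    and \<phi> \<psi> :: "nat \<Rightarrow> 'x \<Rightarrow> 'g::{metric_space, second_countable_topology, topological_group_add, ab_group_add}"
    and C F :: "'g set"
    and \<nu> \<kappa> \<rho> :: "'g measure"
  assumes "prob_space M"
    and "locally_compact_space (euclidean :: 'g topology)"
    and transl_inv: "\<And>x y z :: 'g. dist (x + z) (y + z) = dist x y"
    and "compact C" and "finite F" and "F \<subseteq> C"
    and "\<And>n. \<phi> n \<in> borel_measurable M" and "\<And>n. \<psi> n \<in> borel_measurable M"
    and "\<And>n x. x \<in> space M \<Longrightarrow> \<phi> n x \<in> C"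
    and "\<And>n x. x \<in> space M \<Longrightarrow> \<psi> n x \<in> F"
    and "prob_space \<nu>" and "sets \<nu> = sets borel"
    and "prob_space \<kappa>" and "sets \<kappa> = sets borel"
    and "prob_space \<rho>" and "sets \<rho> = sets borel"
    and "weak_conv_seq (\<lambda>n. distr M borel (\<phi> n)) \<nu>"
    and "weak_conv_seq (\<lambda>n. distr M borel (\<psi> n)) \<kappa>"
    and "weak_conv_seq (\<lambda>n. distr M borel (\<lambda>x. \<phi> n x + \<psi> n x)) \<rho>"
  shows "(\<forall>h0 \<in> measure_supp \<kappa>. \<exists>g0 \<in> measure_supp \<nu>. h0 + g0 \<in> measure_supp \<rho>)
       \<and> (\<forall>g0 \<in> measure_supp \<nu>. \<exists>h0 \<in> measure_supp \<kappa>. h0 + g0 \<in> measure_supp \<rho>)"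
proof -
  note M = assms(1) and phiM[measurable] = assms(7) and psiM[measurable] = assms(8)
    and phiC = assms(9) and psiF = assms(10)
  interpret prob_space M by fact
  have sumM[measurable]: "(\<lambda>x. \<phi> n x + \<psi> n x) \<in> borel_measurable M" for n by measurable
  define E where "E h g e n = {\<omega>\<in>space M. \<psi> n \<omega> = h \<and> \<phi> n \<omega> \<in> ball g e}" for h g e n
  have Esets: "E h g e n \<in> sets M" for h g e n
  proof -
    have "E h g e n = (\<psi> n -` {h} \<inter> space M) \<inter> (\<phi> n -` ball g e \<inter> space M)"
      by (auto simp: E_def)
    moreover have "\<psi> n -` {h} \<inter> space M \<in> sets M"
      by (rule measurable_sets[OF psiM]) simp
    moreover have "\<phi> n -` ball g e \<inter> space M \<in> sets M"
      by (rule measurable_sets[OF phiM]) simp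
    ultimately show ?thesis by simp
  qed
  have fin: "g0 \<in> measure_supp \<nu> \<and> h0 \<in> measure_supp \<kappa> \<and> h0 + g0 \<in> measure_supp \<rho>"
    if H: "\<And>e. e > 0 \<Longrightarrow> \<not> (\<lambda>n. measure M (E h0 g0 e n)) \<longlonglongrightarrow> 0" for h0 g0
  proof (intro conjI)
    show "g0 \<in> measure_supp \<nu>"
    proof (rule suppB[OF M phiM assms(17,11,12)])
      fix e :: real assume e: "e > 0"
      show "\<not> (\<lambda>n. measure M (\<phi> n -` ball g0 e \<inter> space M)) \<longlonglongrightarrow> 0"
      proof
        assume "(\<lambda>n. measure M (\<phi> n -` ball g0 e \<inter> space M)) \<longlonglongrightarrow> 0"
        hence "(\<lambda>n. measure M (E h0 g0 e n)) \<longlonglongrightarrow> 0"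
          by (rule tends0_mono[OF finite_measure, rotated 2]) (auto simp: E_def)
        with H[OF e] show False by blast
      qed
    qed
    show "h0 \<in> measure_supp \<kappa>"
    proof (rule suppB[OF M psiM assms(18,13,14)])
      fix e :: real assume e: "e > 0"
      show "\<not> (\<lambda>n. measure M (\<psi> n -` ball h0 e \<inter> space M)) \<longlonglongrightarrow> 0"
      proof
        assume "(\<lambda>n. measure M (\<psi> n -` ball h0 e \<inter> space M)) \<longlonglongrightarrow> 0"
        hence "(\<lambda>n. measure M (E h0 g0 e n)) \<longlonglongrightarrow> 0"
          by (rule tends0_mono[OF finite_measure, rotated 2]) (use e in \<open>auto simp: E_def\<close>)
        with H[OF e] show False by blast
      qed
    qed
    show "h0 + g0 \<in> measure_supp \<rho>"
    proof (rule suppB[OF M sumM assms(19,15,16)])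
      fix e :: real assume e: "e > 0"
      show "\<not> (\<lambda>n. measure M ((\<lambda>x. \<phi> n x + \<psi> n x) -` ball (h0 + g0) e \<inter> space M)) \<longlonglongrightarrow> 0"
      proof
        assume lim: "(\<lambda>n. measure M ((\<lambda>x. \<phi> n x + \<psi> n x) -` ball (h0 + g0) e \<inter> space M)) \<longlonglongrightarrow> 0"
        have sub: "E h0 g0 e n \<subseteq> (\<lambda>x. \<phi> n x + \<psi> n x) -` ball (h0 + g0) e \<inter> space M" for n
        proof
          fix \<omega> assume "\<omega> \<in> E h0 g0 e n"
          hence w: "\<omega> \<in> space M" "\<psi> n \<omega> = h0" "dist g0 (\<phi> n \<omega>) < e" by (auto simp: E_def)
          have "dist (h0 + g0) (\<phi> n \<omega> + \<psi> n \<omega>) = dist (g0 + h0) (\<phi> n \<omega> + h0)"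
            using w(2) by (simp add: add.commute)
          also have "\<dots> = dist g0 (\<phi> n \<omega>)" by (rule transl_inv)
          finally show "\<omega> \<in> (\<lambda>x. \<phi> n x + \<psi> n x) -` ball (h0 + g0) e \<inter> space M"
            using w by simp
        qed
        have "(\<lambda>n. measure M (E h0 g0 e n)) \<longlonglongrightarrow> 0"
          by (rule tends0_mono[OF finite_measure sub measurable_sets[OF sumM] lim]) simp
        with H[OF e] show False by blast
      qed
    qed
  qed
  show ?thesis
  proof (intro conjI ballI)
    fix h0 assume h0: "h0 \<in> measure_supp \<kappa>"
    have "closed (F - {h0})" using assms(5) by (simp add: finite_imp_closed)
    hence "open (- (F - {h0}))" by (rule open_Compl)
    moreover have "h0 \<in> - (F - {h0})" by simp
    ultimately obtain e0 where e0: "e0 > 0" "ball h0 e0 \<subseteq> - (F - {h0})"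
      using open_contains_ball by blast
    have ev: "\<psi> n -` ball h0 e0 \<inter> space M = {\<omega>\<in>space M. \<psi> n \<omega> = h0}" for n
      using psiF e0 by auto
    have nl: "\<not> (\<lambda>n. measure M {\<omega>\<in>space M. \<psi> n \<omega> = h0}) \<longlonglongrightarrow> 0"
      using suppA[OF M psiM assms(18,13,14) h0 e0(1)] by (simp add: ev)
    have "\<exists>g0. \<forall>e>0. \<not> (\<lambda>n. measure M (E h0 g0 e n)) \<longlonglongrightarrow> 0"
    proof (rule ccontr)
      assume "\<not> ?thesis"
      hence "\<forall>g. \<exists>e. e > 0 \<and> (\<lambda>n. measure M (E h0 g e n)) \<longlonglongrightarrow> 0" by simp
      from choice[OF this] obtain \<epsilon> where \<epsilon>0: "\<forall>g. \<epsilon> g > 0 \<and> (\<lambda>n. measure M (E h0 g (\<epsilon> g) n)) \<longlonglongrightarrow> 0"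
        by blast
      hence \<epsilon>: "\<And>g. \<epsilon> g > 0" "\<And>g. (\<lambda>n. measure M (E h0 g (\<epsilon> g) n)) \<longlonglongrightarrow> 0"
        by auto
      have "C \<subseteq> (\<Union>g\<in>C. ball g (\<epsilon> g))" using \<epsilon>(1) by auto
      then obtain D where D: "D \<subseteq> C" "finite D" "C \<subseteq> (\<Union>g\<in>D. ball g (\<epsilon> g))"
        using compactE_image[OF assms(4), of C "\<lambda>g. ball g (\<epsilon> g)"] by blast
      have sub: "{\<omega>\<in>space M. \<psi> n \<omega> = h0} \<subseteq> (\<Union>g\<in>D. E h0 g (\<epsilon> g) n)" for n
      proof
        fix \<omega> assume w: "\<omega> \<in> {\<omega>\<in>space M. \<psi> n \<omega> = h0}"
        hence "\<phi> n \<omega> \<in> C" using phiC by auto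
        then obtain g where "g \<in> D" "\<phi> n \<omega> \<in> ball g (\<epsilon> g)" using D(3) by blast
        with w show "\<omega> \<in> (\<Union>g\<in>D. E h0 g (\<epsilon> g) n)" unfolding E_def by blast
      qed
      have le: "measure M {\<omega>\<in>space M. \<psi> n \<omega> = h0} \<le> (\<Sum>g\<in>D. measure M (E h0 g (\<epsilon> g) n))" for n
      proof -
        have "measure M {\<omega>\<in>space M. \<psi> n \<omega> = h0} \<le> measure M (\<Union>g\<in>D. E h0 g (\<epsilon> g) n)"
          by (rule finite_measure_mono[OF sub]) (use D(2) Esets in auto)
        also have "\<dots> \<le> (\<Sum>g\<in>D. measure M (E h0 g (\<epsilon> g) n))"
          by (rule finite_measure_subadditive_finite) (use D(2) Esets in auto)
        finally show ?thesis .
      qed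
      have lim: "(\<lambda>n. \<Sum>g\<in>D. measure M (E h0 g (\<epsilon> g) n)) \<longlonglongrightarrow> 0"
        by (rule tendsto_null_sum) (use \<epsilon>(2) in auto)
      have "(\<lambda>n. measure M {\<omega>\<in>space M. \<psi> n \<omega> = h0}) \<longlonglongrightarrow> 0"
        by (rule tendsto_sandwich[OF _ _ tendsto_const lim]) (intro always_eventually allI measure_nonneg le)+
      with nl show False by blast
    qed
    then obtain g0 where g0: "\<forall>e>0. \<not> (\<lambda>n. measure M (E h0 g0 e n)) \<longlonglongrightarrow> 0" by blast
    have "g0 \<in> measure_supp \<nu> \<and> h0 \<in> measure_supp \<kappa> \<and> h0 + g0 \<in> measure_supp \<rho>"
      by (rule fin) (use g0 in simp)
    thus "\<exists>g0\<in>measure_supp \<nu>. h0 + g0 \<in> measure_supp \<rho>" by blast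
  next
    fix g0 assume g0: "g0 \<in> measure_supp \<nu>"
    have "\<exists>h0. \<forall>e>0. \<not> (\<lambda>n. measure M (E h0 g0 e n)) \<longlonglongrightarrow> 0"
    proof (rule ccontr)
      assume "\<not> ?thesis"
      hence "\<forall>h. \<exists>e. e > 0 \<and> (\<lambda>n. measure M (E h g0 e n)) \<longlonglongrightarrow> 0" by simp
      from choice[OF this] obtain \<epsilon> where \<epsilon>0: "\<forall>h. \<epsilon> h > 0 \<and> (\<lambda>n. measure M (E h g0 (\<epsilon> h) n)) \<longlonglongrightarrow> 0"
        by blast
      hence \<epsilon>: "\<And>h. \<epsilon> h > 0" "\<And>h. (\<lambda>n. measure M (E h g0 (\<epsilon> h) n)) \<longlonglongrightarrow> 0"
        by auto
      define e where "e = Min (insert 1 (\<epsilon> ` F))"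
      have e: "e > 0" unfolding e_def using assms(5) \<epsilon>(1) by auto
      have eh: "e \<le> \<epsilon> h" if "h \<in> F" for h unfolding e_def using assms(5) that by auto
      have sub: "\<phi> n -` ball g0 e \<inter> space M \<subseteq> (\<Union>h\<in>F. E h g0 (\<epsilon> h) n)" for n
      proof
        fix \<omega> assume w: "\<omega> \<in> \<phi> n -` ball g0 e \<inter> space M"
        hence "\<psi> n \<omega> \<in> F" using psiF by auto
        moreover have "ball g0 e \<subseteq> ball g0 (\<epsilon> (\<psi> n \<omega>))" using eh[OF \<open>\<psi> n \<omega> \<in> F\<close>] by auto
        ultimately show "\<omega> \<in> (\<Union>h\<in>F. E h g0 (\<epsilon> h) n)" using w unfolding E_def by blast
      qed
      have le: "measure M (\<phi> n -` ball g0 e \<inter> space M) \<le> (\<Sum>h\<in>F. measure M (E h g0 (\<epsilon> h) n))" for n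
      proof -
        have "measure M (\<phi> n -` ball g0 e \<inter> space M) \<le> measure M (\<Union>h\<in>F. E h g0 (\<epsilon> h) n)"
          by (rule finite_measure_mono[OF sub]) (use assms(5) Esets in auto)
        also have "\<dots> \<le> (\<Sum>h\<in>F. measure M (E h g0 (\<epsilon> h) n))"
          by (rule finite_measure_subadditive_finite) (use assms(5) Esets in auto)
        finally show ?thesis .
      qed
      have lim: "(\<lambda>n. \<Sum>h\<in>F. measure M (E h g0 (\<epsilon> h) n)) \<longlonglongrightarrow> 0"
        by (rule tendsto_null_sum) (use \<epsilon>(2) in auto)
      have "(\<lambda>n. measure M (\<phi> n -` ball g0 e \<inter> space M)) \<longlonglongrightarrow> 0"
        by (rule tendsto_sandwich[OF _ _ tendsto_const lim]) (intro always_eventually allI measure_nonneg le)+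
      with suppA[OF M phiM assms(17,11,12) g0 e] show False by blast
    qed
    then obtain h0 where h0: "\<forall>e>0. \<not> (\<lambda>n. measure M (E h0 g0 e n)) \<longlonglongrightarrow> 0" by blast
    have "g0 \<in> measure_supp \<nu> \<and> h0 \<in> measure_supp \<kappa> \<and> h0 + g0 \<in> measure_supp \<rho>"
      by (rule fin) (use h0 in simp)
    thus "\<exists>h0\<in>measure_supp \<kappa>. h0 + g0 \<in> measure_supp \<rho>" by blast
  qed
qed

end
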